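(* Let $G$ be a connected graph of order $n$ with minimum degree $\delta=\delta(G)\geq 1+\sqrt{3n+4}$. Then $$prc(G)-rc(G)\geq \delta-\Big(\frac{3n}{\delta+1}+3\Big).$$
   Context: A path in an edge-coloured graph is a rainbow path if its edges receive pairwise distinct colours. The rainbow connection number $rc(G)$ of a connected graph $G$ is the minimum number of colours in an edge-colouring such that every two distinct vertices are joined by a rainbow path. The proper rainbow connection number $prc(G)$ is the minimum number of colours in a proper edge-colouring (adjacent edges get distinct colours) such that every two distinct vertices are joined by a rainbow path. *)

theory Defs
  imports Complex_Main
begin

definition simple_graph :: "'a set \<Rightarrow> 'a set set \<Rightarrow> bool" where
  "simple_graph V E \<longleftrightarrow> finite V \<and>
     (\<forall>e\<in>E. \<exists>u v. u \<noteq> v \<and> u \<in> V \<and> v \<in> V \<and> e = {u, v})"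

definition is_path :: "'a set \<Rightarrow> 'a set set \<Rightarrow> 'a list \<Rightarrow> bool" where
  "is_path V E xs \<longleftrightarrow> xs \<noteq> [] \<and> distinct xs \<and> set xs \<subseteq> V \<and>
     (\<forall>i. Suc i < length xs \<longrightarrow> {xs ! i, xs ! Suc i} \<in> E)"

definition path_edges :: "'a list \<Rightarrow> 'a set list" where
  "path_edges xs = map (\<lambda>i. {xs ! i, xs ! Suc i}) [0..<length xs - 1]"

definition rainbow_path :: "('a set \<Rightarrow> 'c) \<Rightarrow> 'a list \<Rightarrow> bool" where
  "rainbow_path c xs \<longleftrightarrow> distinct (map c (path_edges xs))"

definition graph_connected :: "'a set \<Rightarrow> 'a set set \<Rightarrow> bool" where
  "graph_connected V E \<longleftrightarrow> V \<noteq> {} \<and>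
     (\<forall>u\<in>V. \<forall>v\<in>V. \<exists>xs. is_path V E xs \<and> hd xs = u \<and> last xs = v)"

definition rainbow_connected :: "'a set \<Rightarrow> 'a set set \<Rightarrow> ('a set \<Rightarrow> nat) \<Rightarrow> bool" where
  "rainbow_connected V E c \<longleftrightarrow>
     (\<forall>u\<in>V. \<forall>v\<in>V. u \<noteq> v \<longrightarrow>
        (\<exists>xs. is_path V E xs \<and> hd xs = u \<and> last xs = v \<and> rainbow_path c xs))"

definition proper_edge_colouring :: "'a set set \<Rightarrow> ('a set \<Rightarrow> nat) \<Rightarrow> bool" where
  "proper_edge_colouring E c \<longleftrightarrow>
     (\<forall>e\<in>E. \<forall>f\<in>E. e \<noteq> f \<and> e \<inter> f \<noteq> {} \<longrightarrow> c e \<noteq> c f)"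

definition rc :: "'a set \<Rightarrow> 'a set set \<Rightarrow> nat" where
  "rc V E = (LEAST k. \<exists>c. c ` E \<subseteq> {..<k} \<and> rainbow_connected V E c)"

definition prc :: "'a set \<Rightarrow> 'a set set \<Rightarrow> nat" where
  "prc V E = (LEAST k. \<exists>c. c ` E \<subseteq> {..<k} \<and> proper_edge_colouring E c
                            \<and> rainbow_connected V E c)"

definition degree :: "'a set set \<Rightarrow> 'a \<Rightarrow> nat" where
  "degree E v = card {e\<in>E. v \<in> e}"

definition min_degree :: "'a set \<Rightarrow> 'a set set \<Rightarrow> nat" where
  "min_degree V E = Min (degree E ` V)"

end

theory Submission
  imports Defs
begin

fun eds :: "'a list \<Rightarrow> 'a set list" where
  "eds (x # y # xs) = {x, y} # eds (y # xs)"
| "eds _ = []"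

lemma path_edges_eds: "path_edges xs = eds xs"
proof (induction xs rule: eds.induct)
  case (1 x y xs)
  have "[0..<length (x # y # xs) - 1] = 0 # map Suc [0..<length (y # xs) - 1]"
    by (simp add: map_Suc_upt upt_conv_Cons del: upt_Suc)
  then show ?case using 1 by (auto simp add: path_edges_def comp_def upt_conv_Cons)
next
  case ("2_1") then show ?case by (simp add: path_edges_def)
next
  case ("2_2" v) then show ?case by (simp add: path_edges_def)
qed

lemma set_eds: "set (eds xs) = {{xs ! i, xs ! Suc i} | i. Suc i < length xs}"
  unfolding path_edges_eds[symmetric] path_edges_def by auto

lemma is_path_eds: "is_path V E xs \<longleftrightarrow> xs \<noteq> [] \<and> distinct xs \<and> set xs \<subseteq> V \<and> set (eds xs) \<subseteq> E"
  unfolding is_path_def set_eds by blast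

lemma eds_append: "eds (xs @ y # ys) = eds (xs @ [y]) @ eds (y # ys)"
proof (induction xs)
  case Nil then show ?case by simp
next
  case (Cons x xs) then show ?case by (cases xs) auto
qed

lemma eds_join:
  assumes "a \<noteq> []" "b \<noteq> []" "last a = hd b"
  shows "set (eds (a @ tl b)) = set (eds a) \<union> set (eds b)"
    "hd (a @ tl b) = hd a" "last (a @ tl b) = last b" "set (a @ tl b) \<subseteq> set a \<union> set b"
proof -
  obtain as l where a: "a = as @ [l]" using assms(1) by (metis append_butlast_last_id)
  obtain h bs where b: "b = h # bs" using assms(2) by (metis list.collapse)
  have l: "l = h" using a b assms(3) by simp
  have e: "a @ tl b = as @ l # bs" using a b by simp
  show "set (eds (a @ tl b)) = set (eds a) \<union> set (eds b)"
    unfolding e using eds_append[of as l bs] a b l by simp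
  show "hd (a @ tl b) = hd a" using assms(1) by simp
  show "last (a @ tl b) = last b" unfolding e using a b l by (cases bs) auto
  show "set (a @ tl b) \<subseteq> set a \<union> set b" unfolding e using a b by auto
qed

lemma eds_rev: "set (eds (rev xs)) = set (eds xs)"
proof (induction xs rule: eds.induct)
  case (1 x y xs)
  have "rev (x # y # xs) = rev xs @ y # [x]" by simp
  then have "set (eds (rev (x # y # xs))) = set (eds (rev (y # xs))) \<union> {{y, x}}"
    using eds_append[of "rev xs" y "[x]"] by simp
  then show ?case using 1 by (auto simp: insert_commute)
qed auto

lemma eds_sub: "e \<in> set (eds xs) \<Longrightarrow> e \<subseteq> set xs"
  by (induction xs rule: eds.induct) auto

lemma distinct_eds: "distinct xs \<Longrightarrow> distinct (eds xs)"
proof (induction xs rule: eds.induct)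
  case (1 x y xs)
  have "\<forall>e\<in>set (eds (y # xs)). e \<subseteq> set (y # xs)" using eds_sub by blast
  then show ?case using 1 by auto
qed auto

lemma walk_path:
  assumes "ws \<noteq> []"
  shows "\<exists>xs. xs \<noteq> [] \<and> distinct xs \<and> set xs \<subseteq> set ws \<and> set (eds xs) \<subseteq> set (eds ws) \<and> hd xs = hd ws \<and> last xs = last ws"
  using assms
proof (induction "length ws" arbitrary: ws rule: less_induct)
  case less
  show ?case
  proof (cases "distinct ws")
    case True then show ?thesis using less.prems by blast
  next
    case False
    then obtain as bs cs y where ws: "ws = as @ [y] @ bs @ [y] @ cs" using not_distinct_decomp by blast
    let ?w = "as @ y # cs"
    have l: "length ?w < length ws" using ws by simp
    have q1: "eds ?w = eds (as @ [y]) @ eds (y # cs)" by (rule eds_append)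
    have q2: "eds (as @ y # (bs @ y # cs)) = eds (as @ [y]) @ eds (y # bs @ y # cs)" by (rule eds_append)
    have q3: "eds ((y # bs) @ y # cs) = eds ((y # bs) @ [y]) @ eds (y # cs)" by (rule eds_append)
    have w2: "ws = as @ y # (bs @ y # cs)" using ws by simp
    have e1: "set (eds ?w) \<subseteq> set (eds ws)"
      unfolding w2 q1 q2 using q3 by auto
    have h: "hd ?w = hd ws" using ws by (cases as) auto
    have la: "last ?w = last ws" using ws by (cases cs) auto
    have s: "set ?w \<subseteq> set ws" using ws by auto
    have ne: "?w \<noteq> []" by simp
    obtain xs where xs: "xs \<noteq> []" "distinct xs" "set xs \<subseteq> set ?w" "set (eds xs) \<subseteq> set (eds ?w)" "hd xs = hd ?w" "last xs = last ?w"
      using less.hyps[OF l ne] by blast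
    show ?thesis apply (rule exI[of _ xs]) using xs e1 h la s by auto
  qed
qed

definition nb :: "'a set set \<Rightarrow> 'a \<Rightarrow> 'a set" where "nb E v = {w. {v, w} \<in> E}"
definition cl :: "'a set set \<Rightarrow> 'a set \<Rightarrow> 'a set" where "cl E D = D \<union> {w. \<exists>d\<in>D. {w, d} \<in> E}"
definition tconn :: "'a set \<Rightarrow> 'a set set \<Rightarrow> bool" where
  "tconn D TE \<longleftrightarrow> (\<forall>a\<in>D. \<forall>b\<in>D. \<exists>ws. ws \<noteq> [] \<and> hd ws = a \<and> last ws = b \<and> set ws \<subseteq> D \<and> set (eds ws) \<subseteq> TE)"

lemma sg_E: assumes "simple_graph V E" "e \<in> E" shows "\<exists>u w. u \<noteq> w \<and> u \<in> V \<and> w \<in> V \<and> e = {u, w}"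
proof -
  from assms(1) have "\<forall>e\<in>E. \<exists>u w. u \<noteq> w \<and> u \<in> V \<and> w \<in> V \<and> e = {u, w}" by (simp add: simple_graph_def)
  then show ?thesis by (rule bspec[OF _ assms(2)])
qed

lemma sg_edge: "simple_graph V E \<Longrightarrow> {a, b} \<in> E \<Longrightarrow> a \<noteq> b \<and> a \<in> V \<and> b \<in> V"
proof -
  assume s: "simple_graph V E" and e: "{a, b} \<in> E"
  then obtain u w where "u \<noteq> w" "u \<in> V" "w \<in> V" "{a, b} = {u, w}" using sg_E[OF s e] by (elim exE conjE)
  then show ?thesis by (auto simp: doubleton_eq_iff)
qed

lemma sg_finE: "simple_graph V E \<Longrightarrow> finite E"
proof -
  assume s: "simple_graph V E"
  have "E \<subseteq> Pow V"
  proof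
    fix e assume e: "e \<in> E"
    obtain u w where "u \<in> V" "w \<in> V" "e = {u, w}" using sg_E[OF s e] by (elim exE conjE)
    then show "e \<in> Pow V" by simp
  qed
  moreover have "finite V" using s unfolding simple_graph_def by simp
  ultimately show ?thesis by (simp add: finite_subset)
qed

lemma sg_finV: "simple_graph V E \<Longrightarrow> finite V" unfolding simple_graph_def by simp

lemma nb_sub: "simple_graph V E \<Longrightarrow> nb E v \<subseteq> V" unfolding nb_def using sg_edge by fastforce

lemma nb_irrefl: "simple_graph V E \<Longrightarrow> v \<notin> nb E v" unfolding nb_def using sg_edge by fastforce

lemma sg_edge': "simple_graph V E \<Longrightarrow> {a, b} \<in> E \<Longrightarrow> a \<in> V" using sg_edge by fastforce
lemma sg_edge'': "simple_graph V E \<Longrightarrow> {a, b} \<in> E \<Longrightarrow> b \<in> V" using sg_edge by fastforce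
lemma sg_edge_ne: "simple_graph V E \<Longrightarrow> {a, b} \<in> E \<Longrightarrow> a \<noteq> b" using sg_edge by fastforce

lemma card_nb: assumes "simple_graph V E" shows "card (nb E v) = degree E v"
proof -
  have "bij_betw (\<lambda>w. {v, w}) (nb E v) {e\<in>E. v \<in> e}"
  proof (rule bij_betwI')
    show "\<And>x y. x \<in> nb E v \<Longrightarrow> y \<in> nb E v \<Longrightarrow> ({v, x} = {v, y}) = (x = y)"
      by (auto simp: doubleton_eq_iff)
    show "\<And>x. x \<in> nb E v \<Longrightarrow> {v, x} \<in> {e \<in> E. v \<in> e}" unfolding nb_def by auto
    fix e assume e: "e \<in> {e \<in> E. v \<in> e}"
    then have "e \<in> E" by simp
    then obtain a b where "e = {a, b}" using sg_E[OF assms] by (meson)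
    then show "\<exists>x\<in>nb E v. e = {v, x}" using e unfolding nb_def by (auto simp: insert_commute)
  qed
  then show ?thesis unfolding degree_def by (rule bij_betw_same_card)
qed

lemma mindeg_le: assumes "simple_graph V E" "v \<in> V" shows "min_degree V E \<le> card (nb E v)"
  unfolding min_degree_def card_nb[OF assms(1)] using assms sg_finV by (intro Min_le) auto

lemma rc_walks:
  assumes "\<forall>u\<in>V. \<forall>v\<in>V. u \<noteq> v \<longrightarrow> (\<exists>ws. ws \<noteq> [] \<and> hd ws = u \<and> last ws = v \<and> set ws \<subseteq> V \<and> set (eds ws) \<subseteq> E \<and> inj_on c (set (eds ws)))"
  shows "rainbow_connected V E c"
  unfolding rainbow_connected_def
proof (intro ballI impI)
  fix u v assume uv: "u \<in> V" "v \<in> V" "u \<noteq> v"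
  then obtain ws where ws: "ws \<noteq> []" "hd ws = u" "last ws = v" "set ws \<subseteq> V" "set (eds ws) \<subseteq> E" "inj_on c (set (eds ws))"
    using assms by blast
  obtain xs where xs: "xs \<noteq> []" "distinct xs" "set xs \<subseteq> set ws" "set (eds xs) \<subseteq> set (eds ws)" "hd xs = hd ws" "last xs = last ws"
    using walk_path[OF ws(1)] by blast
  have "is_path V E xs" unfolding is_path_eds using xs ws by blast
  moreover have "rainbow_path c xs" unfolding rainbow_path_def path_edges_eds distinct_map
    using distinct_eds[OF xs(2)] inj_on_subset[OF ws(6) xs(4)] by blast
  ultimately show "\<exists>xs. is_path V E xs \<and> hd xs = u \<and> last xs = v \<and> rainbow_path c xs"
    using xs ws by blast
qed

lemma prc_ge:
  assumes sg: "simple_graph V E" and gc: "graph_connected V E"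
  shows "degree E v \<le> prc V E"
proof -
  let ?P = "\<lambda>k. \<exists>c. c ` E \<subseteq> {..<k} \<and> proper_edge_colouring E c \<and> rainbow_connected V E c"
  obtain h where h: "bij_betw h E {0..<card E}" using ex_bij_betw_finite_nat[OF sg_finE[OF sg]] by blast
  have "?P (card E)"
  proof (intro exI conjI)
    show "h ` E \<subseteq> {..<card E}" using h unfolding bij_betw_def by auto
    show "proper_edge_colouring E h" unfolding proper_edge_colouring_def using h unfolding bij_betw_def inj_on_def by blast
    show "rainbow_connected V E h"
    proof (rule rc_walks, intro ballI impI)
      fix u w assume "u \<in> V" "w \<in> V" "u \<noteq> w"
      then obtain xs where "is_path V E xs" "hd xs = u" "last xs = w" using gc unfolding graph_connected_def by blast
      moreover have "inj_on h E" using h unfolding bij_betw_def by blast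
      ultimately show "\<exists>ws. ws \<noteq> [] \<and> hd ws = u \<and> last ws = w \<and> set ws \<subseteq> V \<and> set (eds ws) \<subseteq> E \<and> inj_on h (set (eds ws))"
        unfolding is_path_eds by (intro exI[of _ xs]) (auto intro: inj_on_subset)
    qed
  qed
  then have "?P (prc V E)" unfolding prc_def by (rule LeastI)
  then obtain c where c: "c ` E \<subseteq> {..<prc V E}" "proper_edge_colouring E c" by blast
  have "inj_on c {e\<in>E. v \<in> e}" using c(2) unfolding proper_edge_colouring_def inj_on_def by blast
  then have "degree E v = card (c ` {e\<in>E. v \<in> e})" unfolding degree_def by (simp add: card_image)
  also have "\<dots> \<le> card {..<prc V E}" by (rule card_mono) (use c(1) in auto)
  finally show ?thesis by simp
qed

definition inv0 :: "'a set \<Rightarrow> 'a set set \<Rightarrow> 'a set \<Rightarrow> 'a set set \<Rightarrow> bool" where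
  "inv0 V E D TE \<longleftrightarrow> D \<subseteq> V \<and> D \<noteq> {} \<and> TE \<subseteq> E \<and> (\<forall>e\<in>TE. e \<subseteq> D) \<and> card TE + 1 \<le> card D \<and> tconn D TE"

lemma eds_cons: "w \<noteq> [] \<Longrightarrow> eds (x # w) = {x, hd w} # eds w"
  by (cases w) auto

lemma tconn_sym:
  assumes "\<forall>a\<in>D. \<forall>b\<in>D. \<exists>ws. ws \<noteq> [] \<and> hd ws = a \<and> last ws = b \<and> set ws \<subseteq> D \<and> set (eds ws) \<subseteq> TE"
    "a \<in> D" "b \<in> D"
  shows "\<exists>ws. ws \<noteq> [] \<and> hd ws = b \<and> last ws = a \<and> set ws \<subseteq> D \<and> set (eds ws) \<subseteq> TE"
proof -
  obtain ws where "ws \<noteq> []" "hd ws = a" "last ws = b" "set ws \<subseteq> D" "set (eds ws) \<subseteq> TE" using assms by blast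
  then show ?thesis by (intro exI[of _ "rev ws"]) (simp add: eds_rev hd_rev last_rev)
qed

lemma tconn_ext:
  assumes t: "tconn D TE" and d: "d \<in> D"
  shows "tconn (insert x D) (insert {x, d} TE)"
proof -
  have fromx: "\<exists>ws. ws \<noteq> [] \<and> hd ws = x \<and> last ws = b \<and> set ws \<subseteq> insert x D \<and> set (eds ws) \<subseteq> insert {x, d} TE"
    if b: "b \<in> insert x D" for b
  proof (cases "b = x")
    case True then show ?thesis by (intro exI[of _ "[x]"]) simp
  next
    case False
    then have "b \<in> D" using b by simp
    then obtain ws where ws: "ws \<noteq> []" "hd ws = d" "last ws = b" "set ws \<subseteq> D" "set (eds ws) \<subseteq> TE"
      using t d unfolding tconn_def by blast
    show ?thesis by (intro exI[of _ "x # ws"]) (use ws in \<open>auto simp: eds_cons\<close>)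
  qed
  have "\<forall>a\<in>insert x D. \<forall>b\<in>insert x D. \<exists>ws. ws \<noteq> [] \<and> hd ws = a \<and> last ws = b \<and> set ws \<subseteq> insert x D \<and> set (eds ws) \<subseteq> insert {x, d} TE"
  proof (intro ballI)
    fix a b assume a: "a \<in> insert x D" and b: "b \<in> insert x D"
    show "\<exists>ws. ws \<noteq> [] \<and> hd ws = a \<and> last ws = b \<and> set ws \<subseteq> insert x D \<and> set (eds ws) \<subseteq> insert {x, d} TE"
    proof (cases "a = x")
      case True then show ?thesis using fromx[OF b] by simp
    next
      case False
      show ?thesis
      proof (cases "b = x")
        case True
        obtain ws where ws: "ws \<noteq> []" "hd ws = x" "last ws = a" "set ws \<subseteq> insert x D" "set (eds ws) \<subseteq> insert {x, d} TE"
          using fromx[OF a] by blast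
        show ?thesis using True ws by (intro exI[of _ "rev ws"]) (simp add: eds_rev hd_rev last_rev)
      next
        case False
        then have "a \<in> D" "b \<in> D" using a b \<open>a \<noteq> x\<close> by auto
        then obtain ws where "ws \<noteq> []" "hd ws = a" "last ws = b" "set ws \<subseteq> D" "set (eds ws) \<subseteq> TE"
          using t unfolding tconn_def by blast
        then show ?thesis by (intro exI[of _ ws]) auto
      qed
    qed
  qed
  then show ?thesis unfolding tconn_def by blast
qed

lemma ext1:
  assumes sg: "simple_graph V E" and i: "inv0 V E D TE" and x: "x \<in> V" "x \<notin> D" and d: "d \<in> D" and e: "{x, d} \<in> E"
  shows "inv0 V E (insert x D) (insert {x, d} TE) \<and> card (insert x D) = Suc (card D)"
proof -
  have fD: "finite D" using i sg_finV[OF sg] unfolding inv0_def by (meson finite_subset)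
  have fT: "finite TE" using i sg_finE[OF sg] unfolding inv0_def by (meson finite_subset)
  have c: "card (insert x D) = Suc (card D)" using fD x by simp
  have "card (insert {x, d} TE) \<le> Suc (card TE)" using fT by (simp add: card_insert_if)
  then show ?thesis using i x d e c tconn_ext[of D TE d x] unfolding inv0_def by auto
qed

lemma cl_mono: "D \<subseteq> D' \<Longrightarrow> cl E D \<subseteq> cl E D'" unfolding cl_def by blast

lemma cl_sub: "simple_graph V E \<Longrightarrow> D \<subseteq> V \<Longrightarrow> cl E D \<subseteq> V"
  unfolding cl_def using sg_edge' by fastforce

lemma crossing: "xs \<noteq> [] \<Longrightarrow> hd xs \<in> S \<Longrightarrow> last xs \<notin> S \<Longrightarrow> \<exists>p q. {p, q} \<in> set (eds xs) \<and> p \<in> S \<and> q \<notin> S"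
proof (induction xs rule: eds.induct)
  case (1 x y xs)
  show ?case
  proof (cases "y \<in> S")
    case True
    then obtain p q where "{p, q} \<in> set (eds (y # xs)) \<and> p \<in> S \<and> q \<notin> S" using 1 by auto
    then show ?thesis by auto
  next
    case False then show ?thesis using 1 by auto
  qed
qed auto

lemma extend_gain:
  assumes sg: "simple_graph V E" and i: "inv0 V E D TE" and cnt: "(dl + 1) * (card D + 2) \<le> 3 * card (cl E D)"
    and i': "inv0 V E D' TE'" and k: "card D' = card D + k"
    and G: "G \<subseteq> cl E D'" "G \<inter> cl E D = {}" and g: "(dl + 1) * k \<le> 3 * card G" and sub: "D \<subseteq> D'"
  shows "(dl + 1) * (card D' + 2) \<le> 3 * card (cl E D') \<and> card (cl E D) + card G \<le> card (cl E D')"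
proof -
  have f: "finite (cl E D')" using cl_sub[OF sg] i' sg_finV[OF sg] unfolding inv0_def by (meson finite_subset)
  have "cl E D \<union> G \<subseteq> cl E D'" using G cl_mono[OF sub] by blast
  then have "card (cl E D \<union> G) \<le> card (cl E D')" by (rule card_mono[OF f])
  moreover have "card (cl E D \<union> G) = card (cl E D) + card G"
  proof (rule card_Un_disjoint)
    show "finite (cl E D)" using f cl_mono[OF sub, of E] by (rule finite_subset[rotated])
    show "finite G" using f G(1) by (rule finite_subset[rotated])
  qed (use G in blast)
  ultimately have *: "card (cl E D) + card G \<le> card (cl E D')" by simp
  have "(dl + 1) * (card D' + 2) = (dl + 1) * (card D + 2) + (dl + 1) * k" using k by (simp add: algebra_simps)
  also have "\<dots> \<le> 3 * card (cl E D) + 3 * card G" using cnt g by simp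
  also have "\<dots> \<le> 3 * card (cl E D')" using * by simp
  finally show ?thesis using * by simp
qed

lemma card_nb_fin: "simple_graph V E \<Longrightarrow> finite (nb E v)"
  using nb_sub sg_finV finite_subset by metis

lemma dom_structure:
  assumes sg: "simple_graph V E" and gc: "graph_connected V E" and dl2: "2 \<le> dl"
    and deg: "\<forall>v\<in>V. dl \<le> card (nb E v)"
  shows "\<exists>D TE. inv0 V E D TE \<and> (dl + 1) * (card D + 2) \<le> 3 * card (cl E D) \<and>
     (\<forall>y\<in>V - cl E D. \<exists>x1 x2. x1 \<noteq> x2 \<and> x1 \<in> cl E D - D \<and> x2 \<in> cl E D - D \<and> {y, x1} \<in> E \<and> {y, x2} \<in> E) \<and>
     (\<forall>x\<in>cl E D - D. (\<exists>d1 d2. d1 \<noteq> d2 \<and> d1 \<in> D \<and> d2 \<in> D \<and> {x, d1} \<in> E \<and> {x, d2} \<in> E) \<or> (\<exists>x'\<in>cl E D - D. {x, x'} \<in> E))"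
proof -
  define good where "good = (\<lambda>(D, TE). inv0 V E D TE \<and> (dl + 1) * (card D + 2) \<le> 3 * card (cl E D))"
  obtain r where r: "r \<in> V" using gc unfolding graph_connected_def by blast
  have g0: "good ({r}, {})"
  proof -
    have "tconn {r} {}" unfolding tconn_def by (intro ballI exI[of _ "[r]"]) auto
    then have iv: "inv0 V E {r} {}" unfolding inv0_def using r by auto
    have "insert r (nb E r) \<subseteq> cl E {r}" unfolding cl_def nb_def by (auto simp: insert_commute)
    then have "card (insert r (nb E r)) \<le> card (cl E {r})"
      using cl_sub[OF sg, of "{r}"] r sg_finV[OF sg] by (intro card_mono) (auto intro: finite_subset)
    then have "Suc (card (nb E r)) \<le> card (cl E {r})" using nb_irrefl[OF sg] card_nb_fin[OF sg] by simp
    moreover have "dl \<le> card (nb E r)" using deg r by blast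
    ultimately have "(dl + 1) * (card {r} + 2) \<le> 3 * card (cl E {r})" by simp
    then show ?thesis using iv unfolding good_def by simp
  qed
  have bnd: "\<forall>y. good y \<longrightarrow> (\<lambda>(D, TE). card (cl E D)) y < card V + 1"
  proof (intro allI impI)
    fix y assume "good y"
    then obtain D TE where y: "y = (D, TE)" "inv0 V E D TE" unfolding good_def by (cases y) auto
    then have "card (cl E D) \<le> card V" using cl_sub[OF sg] sg_finV[OF sg] unfolding inv0_def by (meson card_mono)
    then show "(\<lambda>(D, TE). card (cl E D)) y < card V + 1" using y by simp
  qed
  obtain z where z: "good z" "\<forall>y. good y \<longrightarrow> (\<lambda>(D, TE). card (cl E D)) y \<le> (\<lambda>(D, TE). card (cl E D)) z"
    using ex_has_greatest_nat[of good, OF g0 bnd] by blast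
  obtain D TE where zz: "z = (D, TE)" by (cases z)
  have i: "inv0 V E D TE" and cnt: "(dl + 1) * (card D + 2) \<le> 3 * card (cl E D)" using z(1) zz unfolding good_def by auto
  have mx: "card (cl E D') \<le> card (cl E D)" if "inv0 V E D' TE'" "(dl + 1) * (card D' + 2) \<le> 3 * card (cl E D')" for D' TE'
    using z(2) zz that unfolding good_def by (metis (mono_tags, lifting) case_prod_conv)
  have DV: "D \<subseteq> V" and Dne: "D \<noteq> {}" using i unfolding inv0_def by auto
  have finV: "finite V" using sg_finV[OF sg] .
  have noext: False if "inv0 V E D' TE'" "D \<subseteq> D'" "card D' = card D + k" "G \<subseteq> cl E D'" "G \<inter> cl E D = {}"
     "(dl + 1) * k \<le> 3 * card G" "0 < card G" for D' TE' G k
  proof -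
    have "(dl + 1) * (card D' + 2) \<le> 3 * card (cl E D') \<and> card (cl E D) + card G \<le> card (cl E D')"
      using extend_gain[OF sg i cnt that(1) that(3) that(4) that(5) that(6) that(2)] .
    then show False using mx[OF that(1)] that(7) by simp
  qed
  have clI: "w \<in> cl E D" if "{w, d} \<in> E" "d \<in> D" for w d using that unfolding cl_def by blast
  have clE: "w \<in> D \<or> (\<exists>d\<in>D. {w, d} \<in> E)" if "w \<in> cl E D" for w using that unfolding cl_def by blast
  have ecom: "{a, b} \<in> E \<Longrightarrow> {b, a} \<in> E" for a b by (simp add: insert_commute)
  have nbI: "w \<in> nb E v \<longleftrightarrow> {v, w} \<in> E" for v w unfolding nb_def by simp

  have A: "\<forall>y\<in>V - cl E D. \<exists>x\<in>cl E D - D. {y, x} \<in> E"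
  proof (rule ccontr)
    assume "\<not> ?thesis"
    then obtain y0 where y0: "y0 \<in> V" "y0 \<notin> cl E D" "\<forall>x\<in>cl E D - D. {y0, x} \<notin> E" by blast
    define S where "S = cl E D \<union> {w\<in>V. \<exists>x\<in>cl E D - D. {w, x} \<in> E}"
    have y0S: "y0 \<notin> S" using y0 unfolding S_def by blast
    obtain r0 where r0: "r0 \<in> D" using Dne by blast
    then have r0S: "r0 \<in> S" unfolding S_def cl_def by blast
    obtain xs where xs: "is_path V E xs" "hd xs = r0" "last xs = y0" using gc r0 DV y0 unfolding graph_connected_def by blast
    obtain p q where pq: "{p, q} \<in> set (eds xs)" "p \<in> S" "q \<notin> S"
      using crossing[of xs S] xs r0S y0S unfolding is_path_eds by blast
    have epq: "{p, q} \<in> E" using pq xs unfolding is_path_eds by blast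
    have qV: "q \<in> V" using sg_edge''[OF sg epq] .
    have pV: "p \<in> V" using sg_edge'[OF sg epq] .
    have pD: "p \<notin> D" using clI[OF ecom[OF epq]] pq(3) unfolding S_def by blast
    have pX: "p \<notin> cl E D - D"
    proof
      assume "p \<in> cl E D - D"
      then have "q \<in> S" using qV ecom[OF epq] unfolding S_def by blast
      then show False using pq(3) by blast
    qed
    then have pcl: "p \<notin> cl E D" using pD by blast
    then obtain x where x: "x \<in> cl E D - D" "{p, x} \<in> E" using pq(2) unfolding S_def by blast
    obtain d where d: "d \<in> D" "{x, d} \<in> E" using x(1) clE by blast
    have xV: "x \<in> V" using sg_edge'[OF sg d(2)] .
    have qcl: "q \<notin> cl E D" using pq(3) unfolding S_def by blast
    have px: "p \<noteq> x" using x(1) pcl by blast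
    have qp: "q \<noteq> p" using pq by blast
    have qx: "q \<noteq> x" using pq(3) x(1) unfolding S_def by blast
    have qD: "q \<notin> D" using qcl unfolding cl_def by blast
    have e1: "inv0 V E (insert x D) (insert {x, d} TE) \<and> card (insert x D) = Suc (card D)"
      using ext1[OF sg i xV _ d] x(1) by blast
    have e2: "inv0 V E (insert p (insert x D)) (insert {p, x} (insert {x, d} TE)) \<and> card (insert p (insert x D)) = Suc (card (insert x D))"
      using ext1[OF sg conjunct1[OF e1] pV _ _ x(2)] px pD by blast
    have e3: "inv0 V E (insert q (insert p (insert x D))) (insert {q, p} (insert {p, x} (insert {x, d} TE))) \<and> card (insert q (insert p (insert x D))) = Suc (card (insert p (insert x D)))"
      using ext1[OF sg conjunct1[OF e2] qV _ _ ecom[OF epq]] qp qx qD by blast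
    let ?D = "insert q (insert p (insert x D))"
    let ?G = "insert q (nb E q)"
    show False
    proof (rule noext[of ?D _ 3 ?G])
      show "inv0 V E ?D (insert {q, p} (insert {p, x} (insert {x, d} TE)))" using e3 by blast
      show "D \<subseteq> ?D" by blast
      show "card ?D = card D + 3" using e1 e2 e3 by simp
      show "?G \<subseteq> cl E ?D" unfolding cl_def nb_def by (auto simp: insert_commute)
      show "?G \<inter> cl E D = {}"
      proof -
        have "w \<notin> cl E D" if "w \<in> nb E q" for w
        proof
          assume "w \<in> cl E D"
          moreover have "{q, w} \<in> E" using that nbI by blast
          ultimately show False using clI[of q w] qcl qV pq(3) unfolding S_def by blast
        qed
        then show ?thesis using qcl by blast
      qed
      have "card ?G = Suc (card (nb E q))" using nb_irrefl[OF sg] card_nb_fin[OF sg] by simp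
      then show "(dl + 1) * 3 \<le> 3 * card ?G" "0 < card ?G" using deg qV by auto
    qed
  qed

  have B: "\<forall>y\<in>V - cl E D. \<exists>x1 x2. x1 \<noteq> x2 \<and> x1 \<in> cl E D - D \<and> x2 \<in> cl E D - D \<and> {y, x1} \<in> E \<and> {y, x2} \<in> E"
  proof (rule ballI, rule ccontr)
    fix y assume y: "y \<in> V - cl E D" and nex: "\<not> (\<exists>x1 x2. x1 \<noteq> x2 \<and> x1 \<in> cl E D - D \<and> x2 \<in> cl E D - D \<and> {y, x1} \<in> E \<and> {y, x2} \<in> E)"
    obtain x where x: "x \<in> cl E D - D" "{y, x} \<in> E" using A y by blast
    have uniq: "x' = x" if "x' \<in> cl E D - D" "{y, x'} \<in> E" for x' using nex x that by blast
    obtain d where d: "d \<in> D" "{x, d} \<in> E" using x(1) clE by blast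
    have xV: "x \<in> V" using sg_edge'[OF sg d(2)] .
    have yD: "y \<notin> D" "y \<noteq> x" using y x(1) unfolding cl_def by blast+
    have e1: "inv0 V E (insert x D) (insert {x, d} TE) \<and> card (insert x D) = Suc (card D)"
      using ext1[OF sg i xV _ d] x(1) by blast
    have e2: "inv0 V E (insert y (insert x D)) (insert {y, x} (insert {x, d} TE)) \<and> card (insert y (insert x D)) = Suc (card (insert x D))"
      using ext1[OF sg conjunct1[OF e1] _ _ _ x(2)] y yD by blast
    let ?D = "insert y (insert x D)"
    let ?G = "insert y (nb E y - {x})"
    show False
    proof (rule noext[of ?D _ 2 ?G])
      show "inv0 V E ?D (insert {y, x} (insert {x, d} TE))" using e2 by blast
      show "D \<subseteq> ?D" by blast
      show "card ?D = card D + 2" using e1 e2 by simp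
      show "?G \<subseteq> cl E ?D" unfolding cl_def nb_def by (auto simp: insert_commute)
      show "?G \<inter> cl E D = {}"
      proof -
        have "w \<notin> cl E D" if "w \<in> nb E y" "w \<noteq> x" for w
        proof
          assume wc: "w \<in> cl E D"
          have ew: "{y, w} \<in> E" using that nbI by blast
          show False
          proof (cases "w \<in> D")
            case True then show False using clI[OF ew] y by blast
          next
            case False then show False using uniq[of w] wc ew that(2) by blast
          qed
        qed
        then show ?thesis using y by blast
      qed
      have xn: "x \<in> nb E y" using x(2) nbI by blast
      have fn: "finite (nb E y)" using card_nb_fin[OF sg] .
      have "y \<notin> nb E y - {x}" using nb_irrefl[OF sg, of y] by blast
      then have cg: "card ?G = Suc (card (nb E y - {x}))" using fn by (intro card_insert_disjoint) auto
      have c1: "card (nb E y - {x}) = card (nb E y) - 1" using xn by (rule card_Diff_singleton)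
      have "0 < card (nb E y)" using xn fn card_gt_0_iff by blast
      then have "card ?G = card (nb E y)" using c1 cg by simp
      then have "dl \<le> card ?G" using deg y by simp
      then show "(dl + 1) * 2 \<le> 3 * card ?G" "0 < card ?G" using dl2 by auto
    qed
  qed

  have C: "\<forall>x\<in>cl E D - D. (\<exists>d1 d2. d1 \<noteq> d2 \<and> d1 \<in> D \<and> d2 \<in> D \<and> {x, d1} \<in> E \<and> {x, d2} \<in> E) \<or> (\<exists>x'\<in>cl E D - D. {x, x'} \<in> E)"
  proof (rule ballI, rule ccontr)
    fix x assume x: "x \<in> cl E D - D" and nex: "\<not> ((\<exists>d1 d2. d1 \<noteq> d2 \<and> d1 \<in> D \<and> d2 \<in> D \<and> {x, d1} \<in> E \<and> {x, d2} \<in> E) \<or> (\<exists>x'\<in>cl E D - D. {x, x'} \<in> E))"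
    obtain d where d: "d \<in> D" "{x, d} \<in> E" using x clE by blast
    have uniq: "d' = d" if "d' \<in> D" "{x, d'} \<in> E" for d' using nex d that by blast
    have nox: "{x, x'} \<notin> E" if "x' \<in> cl E D - D" for x' using nex that by blast
    have xV: "x \<in> V" using sg_edge'[OF sg d(2)] .
    have e1: "inv0 V E (insert x D) (insert {x, d} TE) \<and> card (insert x D) = Suc (card D)"
      using ext1[OF sg i xV _ d] x by blast
    let ?D = "insert x D"
    let ?G = "nb E x - {d}"
    show False
    proof (rule noext[of ?D _ 1 ?G])
      show "inv0 V E ?D (insert {x, d} TE)" using e1 by blast
      show "D \<subseteq> ?D" by blast
      show "card ?D = card D + 1" using e1 by simp
      show "?G \<subseteq> cl E ?D" unfolding cl_def nb_def by (auto simp: insert_commute)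
      show "?G \<inter> cl E D = {}"
      proof -
        have "w \<notin> cl E D" if "w \<in> nb E x" "w \<noteq> d" for w
        proof
          assume wc: "w \<in> cl E D"
          have ew: "{x, w} \<in> E" using that nbI by blast
          show False
          proof (cases "w \<in> D")
            case True then show False using uniq[OF True ew] that(2) by blast
          next
            case False then show False using nox[of w] wc ew by blast
          qed
        qed
        then show ?thesis by blast
      qed
      have dn: "d \<in> nb E x" using d(2) nbI by blast
      have "card ?G = card (nb E x) - 1" using dn card_nb_fin[OF sg, of x] by simp
      moreover have "dl \<le> card (nb E x)" using deg xV by simp
      ultimately show "(dl + 1) * 1 \<le> 3 * card ?G" "0 < card ?G" using dl2 by auto
    qed
  qed
  show ?thesis using i cnt B C by blast
qed

lemma inj_on_Un_disj: "inj_on f A \<Longrightarrow> inj_on f B \<Longrightarrow> f ` A \<inter> f ` B = {} \<Longrightarrow> inj_on f (A \<union> B)"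
  by (auto simp: inj_on_Un)

definition route :: "'a set \<Rightarrow> 'a set set \<Rightarrow> 'a set \<Rightarrow> 'a set set \<Rightarrow> ('a set \<Rightarrow> nat) \<Rightarrow> 'a \<Rightarrow> 'a list \<Rightarrow> bool" where
  "route V E D TE c w ws \<longleftrightarrow> ws \<noteq> [] \<and> hd ws = w \<and> last ws \<in> D \<and> set ws \<subseteq> V \<and> set (eds ws) \<subseteq> E \<and>
     inj_on c (set (eds ws)) \<and> set (eds ws) \<inter> TE = {} \<and> c ` set (eds ws) \<subseteq> {..<5}"

lemma route_base: "d \<in> D \<Longrightarrow> D \<subseteq> V \<Longrightarrow> route V E D TE c d [d] \<and> c ` set (eds [d]) = {}"
  unfolding route_def by auto

lemma route_cons:
  assumes "route V E D TE c w ws" "{y, w} \<in> E" "y \<in> V" "{y, w} \<notin> TE" "c {y, w} < 5" "c {y, w} \<notin> c ` set (eds ws)"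
  shows "route V E D TE c y (y # ws) \<and> c ` set (eds (y # ws)) = insert (c {y, w}) (c ` set (eds ws))"
proof -
  have e: "eds (y # ws) = {y, w} # eds ws" using assms(1) unfolding route_def by (simp add: eds_cons)
  have "last (y # ws) = last ws" using assms(1) unfolding route_def by simp
  then show ?thesis using assms unfolding route_def e by (auto simp: inj_on_insert)
qed

lemma max_indep:
  assumes sg: "simple_graph V E" and X: "X \<subseteq> V"
  shows "\<exists>I. I \<subseteq> X \<and> (\<forall>a\<in>I. \<forall>b\<in>I. {a, b} \<notin> E) \<and> (\<forall>x\<in>X - I. \<exists>w\<in>I. {x, w} \<in> E)"
proof -
  let ?Q = "\<lambda>I. I \<subseteq> X \<and> (\<forall>a\<in>I. \<forall>b\<in>I. {a, b} \<notin> E)"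
  have fX: "finite X" using X sg_finV[OF sg] finite_subset by blast
  have q0: "?Q {}" by simp
  have bd: "\<forall>I. ?Q I \<longrightarrow> card I < card X + 1" using fX by (auto intro: card_mono le_imp_less_Suc)
  obtain I where I: "?Q I" "\<forall>J. ?Q J \<longrightarrow> card J \<le> card I"
    using ex_has_greatest_nat[of ?Q "{}" card, OF q0 bd] by blast
  have "\<forall>x\<in>X - I. \<exists>w\<in>I. {x, w} \<in> E"
  proof (rule ballI, rule ccontr)
    fix x assume x: "x \<in> X - I" and n: "\<not> (\<exists>w\<in>I. {x, w} \<in> E)"
    have xx: "{x, x} \<notin> E" using sg_edge_ne[OF sg, of x x] by blast
    have "?Q (insert x I)"
    proof (intro conjI ballI)
      show "insert x I \<subseteq> X" using I(1) x by blast
      fix a b assume a: "a \<in> insert x I" and b: "b \<in> insert x I"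
      show "{a, b} \<notin> E"
      proof (cases "a = x")
        case True
        then show ?thesis using b n xx by (cases "b = x") auto
      next
        case False
        then have aI: "a \<in> I" using a by blast
        show ?thesis
        proof (cases "b = x")
          case True then show ?thesis using n aI by (auto simp: insert_commute)
        next
          case False
          then have bI: "b \<in> I" using b by simp
          show ?thesis by (rule bspec[OF bspec[OF conjunct2[OF I(1)] aI] bI])
        qed
      qed
    qed
    then have le: "card (insert x I) \<le> card I" by (rule I(2)[rule_format])
    have fI: "finite I" using I(1) fX finite_subset by blast
    have "card (insert x I) = Suc (card I)" using x fI by simp
    then show False using le by simp
  qed
  then show ?thesis using I(1) by (intro exI[of _ I]) simp
qed

lemma disj_sets: "A \<subseteq> S \<Longrightarrow> B \<subseteq> T \<Longrightarrow> S \<inter> T = {} \<Longrightarrow> A \<inter> B = {}" by blast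

lemma colouring:
  assumes sg: "simple_graph V E" and i: "inv0 V E D TE"
   and B: "\<forall>y\<in>V - cl E D. \<exists>x1 x2. x1 \<noteq> x2 \<and> x1 \<in> cl E D - D \<and> x2 \<in> cl E D - D \<and> {y, x1} \<in> E \<and> {y, x2} \<in> E"
   and C: "\<forall>x\<in>cl E D - D. (\<exists>d1 d2. d1 \<noteq> d2 \<and> d1 \<in> D \<and> d2 \<in> D \<and> {x, d1} \<in> E \<and> {x, d2} \<in> E) \<or> (\<exists>x'\<in>cl E D - D. {x, x'} \<in> E)"
  shows "\<exists>c. c ` E \<subseteq> {..<card D + 4} \<and> rainbow_connected V E c"
proof -
  define X1 where "X1 = cl E D - D"
  define X2 where "X2 = V - cl E D"
  have DV: "D \<subseteq> V" and Dne: "D \<noteq> {}" and TEE: "TE \<subseteq> E" and TED: "\<forall>e\<in>TE. e \<subseteq> D"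
    and cTE: "card TE + 1 \<le> card D" and tc: "tconn D TE" using i unfolding inv0_def by auto
  have clV: "cl E D \<subseteq> V" using cl_sub[OF sg DV] .
  have X1V: "X1 \<subseteq> V" unfolding X1_def using clV by blast
  have X1D: "x \<notin> D" if "x \<in> X1" for x using that unfolding X1_def by blast
  have X2D: "y \<notin> D" "y \<notin> X1" if "y \<in> X2" for y using that unfolding X2_def X1_def cl_def by blast+
  have X2V: "X2 \<subseteq> V" unfolding X2_def by blast
  have Dcl: "D \<subseteq> cl E D" unfolding cl_def by blast
  have VD: "V - D = X1 \<union> X2" unfolding X1_def X2_def using clV Dcl by auto
  have finTE: "finite TE" using TEE sg_finE[OF sg] finite_subset by blast
  obtain I where I: "I \<subseteq> X1" "\<forall>a\<in>I. \<forall>b\<in>I. {a, b} \<notin> E" "\<forall>x\<in>X1 - I. \<exists>w\<in>I. {x, w} \<in> E"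
    using max_indep[OF sg X1V] by metis
  have "\<forall>x\<in>X1. \<exists>d. d \<in> D \<and> {x, d} \<in> E" unfolding X1_def cl_def by blast
  then obtain dn where dn: "\<forall>x\<in>X1. dn x \<in> D \<and> {x, dn x} \<in> E" using bchoice[of X1] by metis
  define iso where "iso x \<longleftrightarrow> \<not> (\<exists>x'\<in>X1. {x, x'} \<in> E)" for x
  have "\<forall>x\<in>X1. \<exists>d. d \<in> D \<and> (iso x \<longrightarrow> (d \<noteq> dn x \<and> {x, d} \<in> E))"
  proof
    fix x assume x: "x \<in> X1"
    show "\<exists>d. d \<in> D \<and> (iso x \<longrightarrow> (d \<noteq> dn x \<and> {x, d} \<in> E))"
    proof (cases "iso x")
      case True
      then obtain d1 d2 where "d1 \<noteq> d2" "d1 \<in> D" "d2 \<in> D" "{x, d1} \<in> E" "{x, d2} \<in> E"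
        using C x unfolding X1_def iso_def by blast
      then show ?thesis by (cases "d1 = dn x") auto
    next
      case False then show ?thesis using x dn by blast
    qed
  qed
  then obtain dn2 where dn2: "\<forall>x\<in>X1. dn2 x \<in> D \<and> (iso x \<longrightarrow> (dn2 x \<noteq> dn x \<and> {x, dn2 x} \<in> E))"
    using bchoice[of X1] by metis
  have "\<forall>y\<in>X2. \<exists>p. fst p \<noteq> snd p \<and> fst p \<in> X1 \<and> snd p \<in> X1 \<and> {y, fst p} \<in> E \<and> {y, snd p} \<in> E"
    using B unfolding X1_def X2_def by fastforce
  then obtain xp where xp: "\<forall>y\<in>X2. fst (xp y) \<noteq> snd (xp y) \<and> fst (xp y) \<in> X1 \<and> snd (xp y) \<in> X1 \<and> {y, fst (xp y)} \<in> E \<and> {y, snd (xp y)} \<in> E"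
    using bchoice[of X2] by metis
  define xn where "xn y = fst (xp y)" for y
  define xn2 where "xn2 y = snd (xp y)" for y
  have xn: "\<forall>y\<in>X2. xn y \<noteq> xn2 y \<and> xn y \<in> X1 \<and> xn2 y \<in> X1 \<and> {y, xn y} \<in> E \<and> {y, xn2 y} \<in> E"
    using xp unfolding xn_def xn2_def by blast
  obtain h where h: "bij_betw h TE {0..<card TE}" using ex_bij_betw_finite_nat[OF finTE] by blast
  define pal where "pal e = (if e \<subseteq> X1 then 2 else if (\<exists>x\<in>I. e = {x, dn x}) then 0
      else if (\<exists>x\<in>X1. e = {x, dn x}) then 1 else if (\<exists>x\<in>X1. e = {x, dn2 x}) then 1
      else if (\<exists>y\<in>X2. e = {y, xn y}) then 3 else (4::nat))" for e
  define c where "c e = (if e \<in> TE then 5 + h e else pal e)" for e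

  have F1: "x = x' \<and> d = d'" if "x \<in> X1" "x' \<in> X1" "d \<in> D" "d' \<in> D" "{x, d} = {x', d'}" for x x' d d'
    using that X1D by (auto simp: doubleton_eq_iff)
  have F2: "y = y' \<and> x = x'" if "y \<in> X2" "y' \<in> X2" "x \<in> X1" "x' \<in> X1" "{y, x} = {y', x'}" for y y' x x'
    using that X2D by (auto simp: doubleton_eq_iff)
  have F3: "{y, x} \<noteq> {x', d}" if "y \<in> X2" "x' \<in> X1" "d \<in> D" for y x x' d
    using that X2D by (auto simp: doubleton_eq_iff)
  have nTE: "{a, b} \<notin> TE" if "a \<notin> D" for a b using that TED by blast
  have cpal: "c {a, b} = pal {a, b}" if "a \<notin> D" for a b using nTE[OF that] unfolding c_def by simp

  have cA: "c {x, dn x} = 0" if "x \<in> I" for x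
  proof -
    have x: "x \<in> X1" using that I(1) by blast
    have "\<not> {x, dn x} \<subseteq> X1" using dn x X1D by auto
    then show ?thesis using cpal[OF X1D[OF x]] that unfolding pal_def by auto
  qed
  have cB: "c {x, dn x} = 1" if "x \<in> X1" "x \<notin> I" for x
  proof -
    have "\<not> {x, dn x} \<subseteq> X1" using dn that X1D by auto
    moreover have "\<not> (\<exists>x'\<in>I. {x, dn x} = {x', dn x'})" using F1 dn that I(1) by blast
    ultimately show ?thesis using cpal[OF X1D[OF that(1)]] that unfolding pal_def by auto
  qed
  have cB2: "c {x, dn2 x} = 1" if "x \<in> X1" "iso x" for x
  proof -
    have "\<not> {x, dn2 x} \<subseteq> X1" using dn2 that X1D by auto
    moreover have "\<not> (\<exists>x'\<in>X1. {x, dn2 x} = {x', dn x'})"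
    proof
      assume "\<exists>x'\<in>X1. {x, dn2 x} = {x', dn x'}"
      then obtain x' where "x' \<in> X1" "{x, dn2 x} = {x', dn x'}" by blast
      then show False using F1[of x x' "dn2 x" "dn x'"] dn dn2 that by auto
    qed
    moreover have "\<not> (\<exists>x'\<in>I. {x, dn2 x} = {x', dn x'})" using calculation(2) I(1) by blast
    ultimately show ?thesis using cpal[OF X1D[OF that(1)]] that unfolding pal_def by auto
  qed
  have cX: "c {x, x'} = 2" if "x \<in> X1" "x' \<in> X1" for x x'
    using cpal[OF X1D[OF that(1)]] that unfolding pal_def by auto
  have c3: "c {y, xn y} = 3" if "y \<in> X2" for y
  proof -
    have "\<not> {y, xn y} \<subseteq> X1" using that X2D by auto
    moreover have "\<not> (\<exists>x'\<in>X1. {y, xn y} = {x', dn x'})" using F3 dn that by blast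
    moreover have "\<not> (\<exists>x'\<in>X1. {y, xn y} = {x', dn2 x'})" using F3 dn2 that by blast
    moreover have "\<not> (\<exists>x'\<in>I. {y, xn y} = {x', dn x'})" using calculation(2) I(1) by blast
    ultimately show ?thesis using cpal[OF X2D(1)[OF that]] that unfolding pal_def by auto
  qed
  have c4: "c {y, xn2 y} = 4" if "y \<in> X2" for y
  proof -
    have "\<not> {y, xn2 y} \<subseteq> X1" using that X2D by auto
    moreover have "\<not> (\<exists>x'\<in>X1. {y, xn2 y} = {x', dn x'})" using F3 dn that by blast
    moreover have "\<not> (\<exists>x'\<in>X1. {y, xn2 y} = {x', dn2 x'})" using F3 dn2 that by blast
    moreover have "\<not> (\<exists>x'\<in>I. {y, xn2 y} = {x', dn x'})" using calculation(2) I(1) by blast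
    moreover have "\<not> (\<exists>y'\<in>X2. {y, xn2 y} = {y', xn y'})"
    proof
      assume "\<exists>y'\<in>X2. {y, xn2 y} = {y', xn y'}"
      then obtain y' where y': "y' \<in> X2" "{y, xn2 y} = {y', xn y'}" by blast
      then have "y = y' \<and> xn2 y = xn y'" using F2[of y y' "xn2 y" "xn y'"] xn that by blast
      then show False using xn that by metis
    qed
    ultimately show ?thesis using cpal[OF X2D(1)[OF that]] that unfolding pal_def by auto
  qed

  let ?R = "route V E D TE c"
  have rbase: "?R d [d] \<and> c ` set (eds [d]) = {}" if "d \<in> D" for d using route_base[OF that DV] .
  have rcons: "?R y (y # ws) \<and> c ` set (eds (y # ws)) = insert (c {y, w}) (c ` set (eds ws))"
    if "?R w ws" "{y, w} \<in> E" "y \<in> V" "y \<notin> D" "c {y, w} < 5" "c {y, w} \<notin> c ` set (eds ws)" for y w ws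
    using route_cons[OF that(1,2,3) nTE[OF that(4)] that(5,6)] .
  have r1: "?R x [x, d] \<and> c ` set (eds [x, d]) = {c {x, d}}"
    if "x \<in> X1" "d \<in> D" "{x, d} \<in> E" "c {x, d} < 5" for x d
    using rcons[OF conjunct1[OF rbase[OF that(2)]] that(3) _ X1D[OF that(1)] that(4)] that(1) X1V rbase[OF that(2)] by auto
  have r2: "?R x [x, w, d] \<and> c ` set (eds [x, w, d]) = {2, c {w, d}}"
    if "x \<in> X1" "w \<in> X1" "d \<in> D" "{x, w} \<in> E" "{w, d} \<in> E" "c {w, d} < 2" for x w d
  proof -
    have a: "?R w [w, d] \<and> c ` set (eds [w, d]) = {c {w, d}}" using r1[OF that(2,3,5)] that(6) by simp
    show ?thesis using rcons[OF conjunct1[OF a] that(4) _ X1D[OF that(1)]] a that(1) X1V cX[OF that(1,2)] that(6) by auto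
  qed
  have L1: "\<exists>ra rb. ?R x ra \<and> ?R x rb \<and> c ` set (eds ra) \<subseteq> {0, 2} \<and> c ` set (eds rb) \<subseteq> {1, 2} \<and>
      (x \<in> I \<longrightarrow> c ` set (eds ra) \<subseteq> {0}) \<and> (x \<notin> I \<longrightarrow> c ` set (eds rb) \<subseteq> {1})" if x: "x \<in> X1" for x
  proof (cases "x \<in> I")
    case True
    have d1: "dn x \<in> D" "{x, dn x} \<in> E" using dn x by auto
    have ra: "?R x [x, dn x] \<and> c ` set (eds [x, dn x]) = {0}" using r1[OF x d1] cA[OF True] by simp
    show ?thesis
    proof (cases "iso x")
      case True
      have d2: "dn2 x \<in> D" "{x, dn2 x} \<in> E" using dn2 x True by auto
      have rb: "?R x [x, dn2 x] \<and> c ` set (eds [x, dn2 x]) = {1}" using r1[OF x d2] cB2[OF x True] by simp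
      show ?thesis by (intro exI[of _ "[x, dn x]"] exI[of _ "[x, dn2 x]"]) (use ra rb in simp)
    next
      case False
      then obtain w where w: "w \<in> X1" "{x, w} \<in> E" unfolding iso_def by auto
      have wI: "w \<notin> I"
      proof
        assume "w \<in> I"
        then have "{x, w} \<notin> E" by (rule bspec[OF bspec[OF I(2) \<open>x \<in> I\<close>]])
        then show False using w(2) by simp
      qed
      have d3: "dn w \<in> D" "{w, dn w} \<in> E" using dn w by auto
      have rb: "?R x [x, w, dn w] \<and> c ` set (eds [x, w, dn w]) = {2, 1}"
        using r2[OF x w(1) d3(1) w(2) d3(2)] cB[OF w(1) wI] by simp
      show ?thesis by (intro exI[of _ "[x, dn x]"] exI[of _ "[x, w, dn w]"]) (use ra rb True in auto)
    qed
  next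
    case False
    have d1: "dn x \<in> D" "{x, dn x} \<in> E" using dn x by auto
    have rb: "?R x [x, dn x] \<and> c ` set (eds [x, dn x]) = {1}" using r1[OF x d1] cB[OF x False] by simp
    obtain w where w: "w \<in> I" "{x, w} \<in> E" using I(3) x False by auto
    have wX: "w \<in> X1" using w I(1) by auto
    have d3: "dn w \<in> D" "{w, dn w} \<in> E" using dn wX by auto
    have ra: "?R x [x, w, dn w] \<and> c ` set (eds [x, w, dn w]) = {2, 0}"
      using r2[OF x wX d3(1) w(2) d3(2)] cA[OF w(1)] by simp
    show ?thesis by (intro exI[of _ "[x, w, dn w]"] exI[of _ "[x, dn x]"]) (use ra rb False in simp)
  qed
  have P1: "\<exists>r r'. ?R x r \<and> ?R x' r' \<and> c ` set (eds r) \<inter> c ` set (eds r') = {} \<and>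
      c ` set (eds r) \<subseteq> {0, 1, 2} \<and> c ` set (eds r') \<subseteq> {0, 1, 2}" if xx: "x \<in> X1" "x' \<in> X1" for x x'
  proof -
    obtain ra rb where a: "?R x ra" "?R x rb" "c ` set (eds ra) \<subseteq> {0, 2}" "c ` set (eds rb) \<subseteq> {1, 2}"
      "x \<in> I \<longrightarrow> c ` set (eds ra) \<subseteq> {0}" "x \<notin> I \<longrightarrow> c ` set (eds rb) \<subseteq> {1}" using L1[OF xx(1)] by (elim exE conjE) (rule that)
    obtain ra' rb' where b: "?R x' ra'" "?R x' rb'" "c ` set (eds ra') \<subseteq> {0, 2}" "c ` set (eds rb') \<subseteq> {1, 2}"
      "x' \<in> I \<longrightarrow> c ` set (eds ra') \<subseteq> {0}" "x' \<notin> I \<longrightarrow> c ` set (eds rb') \<subseteq> {1}" using L1[OF xx(2)] by (elim exE conjE) (rule that)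
    show ?thesis
    proof (cases "x \<in> I")
      case True
      have s1: "c ` set (eds ra) \<subseteq> {0}" using True a(5) by simp
      have "c ` set (eds ra) \<inter> c ` set (eds rb') = {}" using disj_sets[OF s1 b(4)] by simp
      then show ?thesis using a(1,3) b(2,4) by (intro exI[of _ ra] exI[of _ rb']) auto
    next
      case False
      have s1: "c ` set (eds rb) \<subseteq> {1}" using False a(6) by simp
      have "c ` set (eds rb) \<inter> c ` set (eds ra') = {}" using disj_sets[OF s1 b(3)] by simp
      then show ?thesis using a(2,4) b(1,3) by (intro exI[of _ rb] exI[of _ ra']) auto
    qed
  qed
  have up: "?R y (y # r) \<and> c ` set (eds (y # r)) = insert 3 (c ` set (eds r))"
    if "y \<in> X2" "?R (xn y) r" "c ` set (eds r) \<subseteq> {0, 1, 2}" for y r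
  proof -
    have cc: "c {y, xn y} = 3" using c3[OF that(1)] .
    have e: "{y, xn y} \<in> E" using xn that(1) by blast
    have yV: "y \<in> V" using that(1) X2V by blast
    have n: "c {y, xn y} \<notin> c ` set (eds r)" using cc that(3) by auto
    have l: "c {y, xn y} < 5" using cc by simp
    show ?thesis using rcons[OF that(2) e yV X2D(1)[OF that(1)] l n] cc by simp
  qed
  have up2: "?R y (y # r) \<and> c ` set (eds (y # r)) = insert 4 (c ` set (eds r))"
    if "y \<in> X2" "?R (xn2 y) r" "c ` set (eds r) \<subseteq> {0, 1, 2}" for y r
  proof -
    have cc: "c {y, xn2 y} = 4" using c4[OF that(1)] .
    have e: "{y, xn2 y} \<in> E" using xn that(1) by blast
    have yV: "y \<in> V" using that(1) X2V by blast
    have n: "c {y, xn2 y} \<notin> c ` set (eds r)" using cc that(3) by auto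
    have l: "c {y, xn2 y} < 5" using cc by simp
    show ?thesis using rcons[OF that(2) e yV X2D(1)[OF that(1)] l n] cc by simp
  qed
  have PO: "\<exists>ru rv. ?R u ru \<and> ?R v rv \<and> c ` set (eds ru) \<inter> c ` set (eds rv) = {}"
    if uv: "u \<in> X1 \<union> X2" "v \<in> X1 \<union> X2" for u v
  proof (cases "u \<in> X1")
    case uX: True
    show ?thesis
    proof (cases "v \<in> X1")
      case True
      obtain r r' where "?R u r" "?R v r'" "c ` set (eds r) \<inter> c ` set (eds r') = {}"
        using P1[OF uX True] by (elim exE conjE) (rule that)
      then show ?thesis by (intro exI[of _ r] exI[of _ r']) simp
    next
      case False
      then have vX: "v \<in> X2" using uv by blast
      have xv: "xn v \<in> X1" using xn vX by blast
      obtain r r' where rr: "?R u r" "?R (xn v) r'" "c ` set (eds r) \<inter> c ` set (eds r') = {}"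
          "c ` set (eds r) \<subseteq> {0, 1, 2}" "c ` set (eds r') \<subseteq> {0, 1, 2}"
        using P1[OF uX xv] by (elim exE conjE) (rule that)
      have u2: "?R v (v # r') \<and> c ` set (eds (v # r')) = insert 3 (c ` set (eds r'))" using up[OF vX rr(2) rr(5)] .
      have "c ` set (eds r) \<inter> c ` set (eds (v # r')) = {}" using u2 rr(3) rr(4) by auto
      then show ?thesis using rr(1) u2 by (intro exI[of _ r] exI[of _ "v # r'"]) simp
    qed
  next
    case uF: False
    then have uX: "u \<in> X2" using uv by blast
    have xu: "xn u \<in> X1" using xn uX by blast
    show ?thesis
    proof (cases "v \<in> X1")
      case True
      obtain r r' where rr: "?R (xn u) r" "?R v r'" "c ` set (eds r) \<inter> c ` set (eds r') = {}"
          "c ` set (eds r) \<subseteq> {0, 1, 2}" "c ` set (eds r') \<subseteq> {0, 1, 2}"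
        using P1[OF xu True] by (elim exE conjE) (rule that)
      have u2: "?R u (u # r) \<and> c ` set (eds (u # r)) = insert 3 (c ` set (eds r))" using up[OF uX rr(1) rr(4)] .
      have "c ` set (eds (u # r)) \<inter> c ` set (eds r') = {}" using u2 rr(3) rr(5) by auto
      then show ?thesis using rr(2) u2 by (intro exI[of _ "u # r"] exI[of _ r']) simp
    next
      case False
      then have vX: "v \<in> X2" using uv by blast
      have xv: "xn2 v \<in> X1" using xn vX by blast
      obtain r r' where rr: "?R (xn u) r" "?R (xn2 v) r'" "c ` set (eds r) \<inter> c ` set (eds r') = {}"
          "c ` set (eds r) \<subseteq> {0, 1, 2}" "c ` set (eds r') \<subseteq> {0, 1, 2}"
        using P1[OF xu xv] by (elim exE conjE) (rule that)
      have u2: "?R u (u # r) \<and> c ` set (eds (u # r)) = insert 3 (c ` set (eds r))" using up[OF uX rr(1) rr(4)] .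
      have v2: "?R v (v # r') \<and> c ` set (eds (v # r')) = insert 4 (c ` set (eds r'))" using up2[OF vX rr(2) rr(5)] .
      have "c ` set (eds (u # r)) \<inter> c ` set (eds (v # r')) = {}" using u2 v2 rr(3) rr(4) rr(5) by auto
      then show ?thesis using u2 v2 by (intro exI[of _ "u # r"] exI[of _ "v # r'"]) simp
    qed
  qed
  have anyr: "\<exists>r. ?R v r" if "v \<in> V" for v
  proof (cases "v \<in> D")
    case True then show ?thesis using rbase by blast
  next
    case False
    then have "v \<in> X1 \<union> X2" using VD that by blast
    then show ?thesis using PO by blast
  qed
  have PV: "\<exists>ru rv. ?R u ru \<and> ?R v rv \<and> c ` set (eds ru) \<inter> c ` set (eds rv) = {}"
    if uv: "u \<in> V" "v \<in> V" for u v
  proof (cases "u \<in> D")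
    case True
    obtain rv where "?R v rv" using anyr[OF uv(2)] by blast
    then show ?thesis using rbase[OF True] by (intro exI[of _ "[u]"] exI[of _ rv]) simp
  next
    case uF: False
    show ?thesis
    proof (cases "v \<in> D")
      case True
      obtain ru where "?R u ru" using anyr[OF uv(1)] by blast
      then show ?thesis using rbase[OF True] by (intro exI[of _ ru] exI[of _ "[v]"]) simp
    next
      case False
      then show ?thesis using PO[of u v] uF uv VD by blast
    qed
  qed
  have hinj: "inj_on h TE" and himg: "h ` TE = {0..<card TE}" using h unfolding bij_betw_def by auto
  have cTEinj: "inj_on c TE" using hinj unfolding inj_on_def c_def by auto
  have cTEge: "5 \<le> c e" if "e \<in> TE" for e using that unfolding c_def by simp
  have rcn: "rainbow_connected V E c"
  proof (rule rc_walks, intro ballI impI)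
    fix u v assume uv: "u \<in> V" "v \<in> V" "u \<noteq> v"
    obtain ru rv where rr: "?R u ru" "?R v rv" "c ` set (eds ru) \<inter> c ` set (eds rv) = {}"
      using PV[OF uv(1,2)] by (elim exE conjE) (rule that)
    have ru: "ru \<noteq> []" "hd ru = u" "last ru \<in> D" "set ru \<subseteq> V" "set (eds ru) \<subseteq> E" "inj_on c (set (eds ru))"
        "c ` set (eds ru) \<subseteq> {..<5}"
      using rr(1) unfolding route_def by auto
    have rv: "rv \<noteq> []" "hd rv = v" "last rv \<in> D" "set rv \<subseteq> V" "set (eds rv) \<subseteq> E" "inj_on c (set (eds rv))"
        "c ` set (eds rv) \<subseteq> {..<5}"
      using rr(2) unfolding route_def by auto
    obtain tw where tw: "tw \<noteq> []" "hd tw = last ru" "last tw = last rv" "set tw \<subseteq> D" "set (eds tw) \<subseteq> TE"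
      using tc ru(3) rv(3) unfolding tconn_def by (elim ballE exE conjE) (rule that, auto)
    let ?w1 = "ru @ tl tw"
    have j1: "set (eds ?w1) = set (eds ru) \<union> set (eds tw)" "hd ?w1 = hd ru" "last ?w1 = last tw" "set ?w1 \<subseteq> set ru \<union> set tw"
      using eds_join[OF ru(1) tw(1) tw(2)[symmetric]] by auto
    have w1ne: "?w1 \<noteq> []" using ru(1) by simp
    have rne: "rev rv \<noteq> []" using rv(1) by simp
    have lh: "last ?w1 = hd (rev rv)" using j1(3) tw(3) rv(1) by (simp add: hd_rev)
    let ?w2 = "?w1 @ tl (rev rv)"
    have j2: "set (eds ?w2) = set (eds ?w1) \<union> set (eds (rev rv))" "hd ?w2 = hd ?w1" "last ?w2 = last (rev rv)"
        "set ?w2 \<subseteq> set ?w1 \<union> set (rev rv)"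
      using eds_join[OF w1ne rne lh] by auto
    have E2: "set (eds ?w2) = set (eds ru) \<union> set (eds tw) \<union> set (eds rv)" using j2(1) j1(1) eds_rev[of rv] by (simp only:)
    have injT: "inj_on c (set (eds tw))" using inj_on_subset[OF cTEinj tw(5)] .
    have dAT: "c ` set (eds ru) \<inter> c ` set (eds tw) = {}" using ru(7) tw(5) cTEge by fastforce
    have dTB: "c ` set (eds tw) \<inter> c ` set (eds rv) = {}" using rv(7) tw(5) cTEge by fastforce
    have inj1: "inj_on c (set (eds ru) \<union> set (eds tw))" using inj_on_Un_disj[OF ru(6) injT dAT] .
    have "c ` (set (eds ru) \<union> set (eds tw)) \<inter> c ` set (eds rv) = {}" using dTB rr(3) by auto
    then have inj2: "inj_on c (set (eds ?w2))" unfolding E2 using inj_on_Un_disj[OF inj1 rv(6)] by simp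
    have "hd ?w2 = u" using j2(2) j1(2) ru(2) by simp
    moreover have "last ?w2 = v" using j2(3) rv(1) rv(2) by (simp add: last_rev)
    moreover have "set ?w2 \<subseteq> V"
    proof -
      have a1: "set ?w1 \<subseteq> V" using j1(4) ru(4) tw(4) DV by blast
      have a2: "set (rev rv) \<subseteq> V" using rv(4) by simp
      show ?thesis using j2(4) a1 a2 by blast
    qed
    moreover have "set (eds ?w2) \<subseteq> E" unfolding E2 using ru(5) rv(5) tw(5) TEE by auto
    moreover have "?w2 \<noteq> []" using ru(1) by simp
    ultimately show "\<exists>ws. ws \<noteq> [] \<and> hd ws = u \<and> last ws = v \<and> set ws \<subseteq> V \<and> set (eds ws) \<subseteq> E \<and> inj_on c (set (eds ws))"
      using inj2 by (intro exI[of _ ?w2]) simp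
  qed
  have cD: "1 \<le> card D" using Dne DV sg_finV[OF sg] by (meson card_0_eq finite_subset less_one not_le)
  have "c ` E \<subseteq> {..<card D + 4}"
  proof
    fix k assume "k \<in> c ` E"
    then obtain e where e: "e \<in> E" "k = c e" by blast
    show "k \<in> {..<card D + 4}"
    proof (cases "e \<in> TE")
      case True
      then have "h e < card TE" using himg by auto
      then show ?thesis using e True cTE unfolding c_def by simp
    next
      case False
      have "pal e \<le> 4" unfolding pal_def by simp
      then show ?thesis using e False cD unfolding c_def by simp
    qed
  qed
  then show ?thesis using rcn by blast
qed

theorem theorem3p3:
  fixes V :: "'a set" and E :: "'a set set"
  assumes "simple_graph V E"
    and "graph_connected V E"
    and "real (min_degree V E) \<ge> 1 + sqrt (3 * real (card V) + 4)"
  shows "real (prc V E) - real (rc V E)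
           \<ge> real (min_degree V E) - (3 * real (card V) / (real (min_degree V E) + 1) + 3)"
proof -
  note sg = assms(1) and gc = assms(2)
  define dl where "dl = min_degree V E"
  have Vne: "V \<noteq> {}" using gc unfolding graph_connected_def by blast
  have deg: "\<forall>v\<in>V. dl \<le> card (nb E v)" using mindeg_le[OF sg] unfolding dl_def by blast
  have "sqrt 4 \<le> sqrt (3 * real (card V) + 4)" by (intro real_sqrt_le_mono) simp
  then have "2 \<le> sqrt (3 * real (card V) + 4)" by simp
  then have "real dl \<ge> 3" using assms(3) unfolding dl_def by linarith
  then have dl2: "2 \<le> dl" by linarith
  obtain D TE where DT: "inv0 V E D TE" "(dl + 1) * (card D + 2) \<le> 3 * card (cl E D)"
    "\<forall>y\<in>V - cl E D. \<exists>x1 x2. x1 \<noteq> x2 \<and> x1 \<in> cl E D - D \<and> x2 \<in> cl E D - D \<and> {y, x1} \<in> E \<and> {y, x2} \<in> E"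
    "\<forall>x\<in>cl E D - D. (\<exists>d1 d2. d1 \<noteq> d2 \<and> d1 \<in> D \<and> d2 \<in> D \<and> {x, d1} \<in> E \<and> {x, d2} \<in> E) \<or> (\<exists>x'\<in>cl E D - D. {x, x'} \<in> E)"
    using dom_structure[OF sg gc dl2 deg] by (elim exE conjE) (rule that)
  obtain c where c: "c ` E \<subseteq> {..<card D + 4}" "rainbow_connected V E c"
    using colouring[OF sg DT(1) DT(3) DT(4)] by (elim exE conjE) (rule that)
  have rcle: "rc V E \<le> card D + 4" unfolding rc_def using c by (intro Least_le) blast
  have DV: "D \<subseteq> V" using DT(1) unfolding inv0_def by blast
  have "card (cl E D) \<le> card V" using cl_sub[OF sg DV] sg_finV[OF sg] by (rule card_mono[rotated])
  then have cnt: "(dl + 1) * (card D + 2) \<le> 3 * card V" using DT(2) by linarith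
  obtain v where v: "v \<in> V" using Vne by blast
  have "dl \<le> card (nb E v)" using deg v by blast
  then have "dl \<le> degree E v" using card_nb[OF sg, of v] by simp
  then have prcge: "dl \<le> prc V E" using prc_ge[OF sg gc, of v] by linarith
  have cntr: "(real dl + 1) * (real (card D) + 2) \<le> 3 * real (card V)"
    using cnt by (metis (mono_tags, opaque_lifting) of_nat_add of_nat_le_iff of_nat_mult of_nat_numeral of_nat_1)
  have pos: "0 < real dl + 1" by simp
  have "real (card D) + 2 \<le> 3 * real (card V) / (real dl + 1)"
    using cntr pos by (simp add: field_simps)
  then have "real (rc V E) \<le> 3 * real (card V) / (real dl + 1) + 2" using rcle by linarith
  then show ?thesis using prcge unfolding dl_def[symmetric] by linarith
qed

end
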